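(* Let $\mathcal I$ be an instance of the a priori TRP on a metric $(V,d)$ with root $r$, $n=|V|$, and probabilities $\{p_v\}$. Let $X=\{v\in V: p_v\ge 1/n^2\}$, $p=\frac1n\min_{v\in X}p_v$, and let $\mathcal J$ be the uniform instance on the vertex set $\bigcup_{v\in X}S_v$, where $S_v$ consists of $t_v=\lceil p_v/p\rceil$ co-located copies of $v$ (distance $0$ within $S_v$, distance $d(u,v)$ between copies of $u$ and $v$), each copy independently active with probability $p$. Suppose $\widehat\pi$ is a consecutive master tour on $\mathcal J$ (visiting each $S_v$ consecutively) whose expected latency is at most $\rho\,\mathrm{OPT}(\mathcal J)$, and let $\pi$ be the tour on $X$ visiting the vertices of $X$ in the order in which the groups $S_v$ appear in $\widehat\pi$. Then, with $A$ the random active set of $\mathcal I$, $$\mathbb{E}_A\Big[\sum_{v\in A\cap X}\mathsf{LAT}^A_\pi(v)\Big]\le(1+o(1))\left(\frac{e}{e-1}\right)^4\rho\cdot\mathrm{OPT}_X,$$ where $\mathrm{OPT}_X$ is the optimal value of the a priori TRP instance restricted to the vertices $X$, and $o(1)$ is with respect to $n\to\infty$.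
   Context: An instance of the a priori TRP consists of a finite metric $(V,d)$, a root $r$, and independent activation probabilities $p_v$. A master tour is a tour from $r$ visiting all vertices; for a random active set $A$ (each $v$ independently active with probability $p_v$), the tour is shortcut to $A$, and $\mathsf{LAT}^A_\pi(v)$ is the distance from $r$ to $v$ along the shortcut tour. The expected latency (cost) of a master tour is the expected sum of latencies of active vertices; $\mathrm{OPT}$ denotes the minimum cost over master tours. *)

theory Defs
  imports Complex_Main
begin

definition metric_on :: "'a set \<Rightarrow> ('a \<Rightarrow> 'a \<Rightarrow> real) \<Rightarrow> bool" where
  "metric_on V d \<longleftrightarrow>
     (\<forall>u\<in>V. \<forall>v\<in>V. d u v \<ge> 0 \<and> d u v = d v u \<and> (d u v = 0 \<longleftrightarrow> u = v)) \<and>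
     (\<forall>u\<in>V. \<forall>v\<in>V. \<forall>w\<in>V. d u w \<le> d u v + d v w)"

definition act_prob :: "'a set \<Rightarrow> ('a \<Rightarrow> real) \<Rightarrow> 'a set \<Rightarrow> real" where
  "act_prob C p A = (\<Prod>v\<in>A. p v) * (\<Prod>v\<in>C - A. 1 - p v)"

fun path_len :: "('a \<Rightarrow> 'a \<Rightarrow> real) \<Rightarrow> 'a list \<Rightarrow> real" where
  "path_len d (x # y # xs) = d x y + path_len d (y # xs)"
| "path_len d _ = 0"

text \<open>Latency of v when the master tour pi (order of visits after leaving r)
  is shortcut to the active set A: distance from r to v along the shortcut tour.\<close>
definition lat :: "('a \<Rightarrow> 'a \<Rightarrow> real) \<Rightarrow> 'a \<Rightarrow> 'a list \<Rightarrow> 'a set \<Rightarrow> 'a \<Rightarrow> real" where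
  "lat d r \<pi> A v = path_len d (r # takeWhile (\<lambda>u. u \<noteq> v) (filter (\<lambda>u. u \<in> A) \<pi>) @ [v])"

definition exp_lat :: "('a \<Rightarrow> 'a \<Rightarrow> real) \<Rightarrow> 'a \<Rightarrow> 'a set \<Rightarrow> ('a \<Rightarrow> real) \<Rightarrow> 'a list \<Rightarrow> real" where
  "exp_lat d r C p \<pi> = (\<Sum>A\<in>Pow C. act_prob C p A * (\<Sum>v\<in>A \<inter> set \<pi>. lat d r \<pi> A v))"

text \<open>Master tours on client set C (root excluded): orderings of C.\<close>
definition master_tours :: "'a set \<Rightarrow> 'a list set" where
  "master_tours C = {\<pi>. distinct \<pi> \<and> set \<pi> = C}"

definition opt :: "('a \<Rightarrow> 'a \<Rightarrow> real) \<Rightarrow> 'a \<Rightarrow> 'a set \<Rightarrow> ('a \<Rightarrow> real) \<Rightarrow> real" where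
  "opt d r C p = Min (exp_lat d r C p ` master_tours C)"

definition heavy :: "'a set \<Rightarrow> 'a \<Rightarrow> ('a \<Rightarrow> real) \<Rightarrow> 'a set" where
  "heavy V r p = {v \<in> V - {r}. p v \<ge> 1 / real (card V) ^ 2}"

definition J_prob :: "'a set \<Rightarrow> 'a \<Rightarrow> ('a \<Rightarrow> real) \<Rightarrow> real" where
  "J_prob V r p = (1 / real (card V)) * Min (p ` heavy V r p)"

definition J_copies :: "'a set \<Rightarrow> 'a \<Rightarrow> ('a \<Rightarrow> real) \<Rightarrow> 'a \<Rightarrow> nat" where
  "J_copies V r p v = nat \<lceil>p v / J_prob V r p\<rceil>"

text \<open>Clients of the uniform instance J: copies (v,i), 1 <= i <= t_v, of heavy v.
  The root of J is (r,0), which is not a client.\<close>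
definition J_clients :: "'a set \<Rightarrow> 'a \<Rightarrow> ('a \<Rightarrow> real) \<Rightarrow> ('a \<times> nat) set" where
  "J_clients V r p = (SIGMA v:heavy V r p. {1..J_copies V r p v})"

definition J_dist :: "('a \<Rightarrow> 'a \<Rightarrow> real) \<Rightarrow> ('a \<times> nat) \<Rightarrow> ('a \<times> nat) \<Rightarrow> real" where
  "J_dist d x y = d (fst x) (fst y)"

definition consecutive :: "('a \<times> nat) list \<Rightarrow> bool" where
  "consecutive \<pi> \<longleftrightarrow> (\<forall>i j k. i \<le> j \<and> j \<le> k \<and> k < length \<pi> \<and> fst (\<pi> ! i) = fst (\<pi> ! k)
       \<longrightarrow> fst (\<pi> ! j) = fst (\<pi> ! i))"

end

theory Submission
  imports Defs
begin


fun Gl :: "('b \<Rightarrow> 'b \<Rightarrow> real) \<Rightarrow> 'b \<Rightarrow> ('b \<times> real) list \<Rightarrow> 'b \<Rightarrow> real" where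
  "Gl d s [] v = d s v"
| "Gl d s ((x,a)#xs) v = a * (d s x + Gl d x xs v) + (1 - a) * Gl d s xs v"

lemma act_prob_sum1:
  assumes "finite S" shows "(\<Sum>B\<in>Pow S. act_prob S p B) = 1"
  using prod_add[OF assms, of p "\<lambda>x. 1 - p x"] by (simp add: act_prob_def)

lemma act_prob_ins_out:
  assumes "finite E" "w \<notin> E" "A \<subseteq> E"
  shows "act_prob (insert w E) p A = (1 - p w) * act_prob E p A"
proof -
  have "insert w E - A = insert w (E - A)" using assms by auto
  then show ?thesis using assms by (simp add: act_prob_def mult_ac)
qed

lemma act_prob_ins_in:
  assumes "finite E" "w \<notin> E" "A \<subseteq> E"
  shows "act_prob (insert w E) p (insert w A) = p w * act_prob E p A"
proof -
  have "insert w E - insert w A = E - A" using assms by auto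
  moreover have "finite A" using assms finite_subset by auto
  moreover have "w \<notin> A" using assms by auto
  ultimately show ?thesis using assms by (simp add: act_prob_def mult_ac)
qed

lemma sum_Pow_insert:
  assumes "finite E" "w \<notin> E"
  shows "(\<Sum>A\<in>Pow (insert w E). f A) = (\<Sum>A\<in>Pow E. f A) + (\<Sum>A\<in>Pow E. f (insert w A))"
proof -
  have "(\<Sum>A\<in>Pow (insert w E). f A) = (\<Sum>A\<in>Pow E. f A) + (\<Sum>A\<in>insert w ` Pow E. f A)"
    unfolding Pow_insert by (rule sum.union_disjoint) (use assms in auto)
  also have "(\<Sum>A\<in>insert w ` Pow E. f A) = (\<Sum>A\<in>Pow E. f (insert w A))"
    by (rule sum.reindex_cong[where l="insert w"]) (use assms in \<open>auto simp: inj_on_def\<close>)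
  finally show ?thesis .
qed

lemma marginal:
  assumes "finite D" "finite T" "T \<inter> D = {}"
  shows "(\<Sum>A\<in>Pow (T \<union> D). act_prob (T \<union> D) p A * h (A \<inter> T)) = (\<Sum>B\<in>Pow T. act_prob T p B * h B)"
  using assms
proof (induction D rule: finite_induct)
  case empty then show ?case by (simp, intro sum.cong) (auto simp: Int_absorb2)
next
  case (insert w D)
  let ?E = "T \<union> D"
  have fE: "finite ?E" "w \<notin> ?E" using insert by auto
  have eq: "T \<union> insert w D = insert w ?E" by auto
  have "(\<Sum>A\<in>Pow (insert w ?E). act_prob (insert w ?E) p A * h (A \<inter> T))
     = (\<Sum>A\<in>Pow ?E. act_prob (insert w ?E) p A * h (A \<inter> T)) + (\<Sum>A\<in>Pow ?E. act_prob (insert w ?E) p (insert w A) * h (insert w A \<inter> T))"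
    by (rule sum_Pow_insert[OF fE])
  also have "\<dots> = (\<Sum>A\<in>Pow ?E. (1 - p w) * (act_prob ?E p A * h (A \<inter> T))) + (\<Sum>A\<in>Pow ?E. p w * (act_prob ?E p A * h (A \<inter> T)))"
  proof -
    have "\<And>A. A \<in> Pow ?E \<Longrightarrow> insert w A \<inter> T = A \<inter> T" using insert by auto
    then show ?thesis
      by (intro arg_cong2[where f="(+)"] sum.cong refl) (auto simp: act_prob_ins_out[OF fE] act_prob_ins_in[OF fE])
  qed
  also have "\<dots> = (\<Sum>A\<in>Pow ?E. ((1 - p w) + p w) * (act_prob ?E p A * h (A \<inter> T)))"
    by (simp only: sum.distrib[symmetric] distrib_right)
  also have "\<dots> = (\<Sum>A\<in>Pow ?E. act_prob ?E p A * h (A \<inter> T))"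
    by simp
  finally show ?case using insert by (simp add: eq)
qed

lemma marginal2:
  assumes "finite C" "T \<subseteq> C"
  shows "(\<Sum>A\<in>Pow C. act_prob C p A * h (A \<inter> T)) = (\<Sum>B\<in>Pow T. act_prob T p B * h B)"
proof -
  have e: "T \<union> (C - T) = C" using assms by auto
  have "finite T" using assms finite_subset by auto
  then show ?thesis using marginal[of "C - T" T p h] assms by (simp add: e Un_absorb1)
qed

lemma path_expect:
  assumes "distinct xs"
  shows "(\<Sum>B\<in>Pow (set xs). act_prob (set xs) p B * path_len d (s # filter (\<lambda>u. u \<in> B) xs @ [v]))
         = Gl d s (map (\<lambda>u. (u, p u)) xs) v"
  using assms
proof (induction xs arbitrary: s)
  case Nil then show ?case by (simp add: act_prob_def)
next
  case (Cons x xs)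
  have fE: "finite (set xs)" "x \<notin> set xs" using Cons by auto
  have f1: "\<And>B. B \<in> Pow (set xs) \<Longrightarrow> filter (\<lambda>u. u \<in> B) (x # xs) = filter (\<lambda>u. u \<in> B) xs"
    using fE by (auto intro!: filter_cong)
  have f2: "\<And>B. B \<in> Pow (set xs) \<Longrightarrow> filter (\<lambda>u. u \<in> insert x B) (x # xs) = x # filter (\<lambda>u. u \<in> B) xs"
    using fE by (auto intro!: filter_cong)
  have "(\<Sum>B\<in>Pow (set (x#xs)). act_prob (set (x#xs)) p B * path_len d (s # filter (\<lambda>u. u \<in> B) (x#xs) @ [v]))
     = (\<Sum>B\<in>Pow (set xs). (1 - p x) * (act_prob (set xs) p B * path_len d (s # filter (\<lambda>u. u \<in> B) xs @ [v])))
     + (\<Sum>B\<in>Pow (set xs). p x * (act_prob (set xs) p B * d s x) + p x * (act_prob (set xs) p B * path_len d (x # filter (\<lambda>u. u \<in> B) xs @ [v])))"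
    apply (simp only: set_simps sum_Pow_insert[OF fE])
    apply (intro arg_cong2[where f="(+)"] sum.cong refl)
    using fE f1 f2 by (auto simp: act_prob_ins_out act_prob_ins_in algebra_simps)
  also have "\<dots> = (1 - p x) * Gl d s (map (\<lambda>u. (u, p u)) xs) v + p x * (d s x + Gl d x (map (\<lambda>u. (u, p u)) xs) v)"
  proof -
    let ?a = "act_prob (set xs) p"
    have S1: "(\<Sum>B\<in>Pow (set xs). (1 - p x) * (?a B * path_len d (s # filter (\<lambda>u. u \<in> B) xs @ [v])))
        = (1 - p x) * Gl d s (map (\<lambda>u. (u, p u)) xs) v"
      using Cons by (simp add: sum_distrib_left[symmetric])
    have S2: "(\<Sum>B\<in>Pow (set xs). p x * (?a B * d s x) + p x * (?a B * path_len d (x # filter (\<lambda>u. u \<in> B) xs @ [v])))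
        = p x * d s x * (\<Sum>B\<in>Pow (set xs). ?a B) + p x * (\<Sum>B\<in>Pow (set xs). ?a B * path_len d (x # filter (\<lambda>u. u \<in> B) xs @ [v]))"
      by (simp add: sum.distrib sum_distrib_left sum_distrib_right mult_ac)
    show ?thesis using Cons act_prob_sum1[OF fE(1), of p] S1 S2 by (simp add: algebra_simps)
  qed
  finally show ?case by (simp add: algebra_simps)
qed


lemma tw_filter:
  "v \<in> A \<Longrightarrow> takeWhile (\<lambda>u. u \<noteq> v) (filter (\<lambda>u. u \<in> A) \<pi>) = filter (\<lambda>u. u \<in> A) (takeWhile (\<lambda>u. u \<noteq> v) \<pi>)"
  by (induction \<pi>) auto

lemma distinct_tw: "distinct xs \<Longrightarrow> distinct (takeWhile P xs)"
  by (metis distinct_append takeWhile_dropWhile_id)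

lemma per_vertex:
  assumes "finite C" "distinct \<pi>" "set \<pi> \<subseteq> C" "v \<in> set \<pi>"
  shows "(\<Sum>A\<in>Pow C. act_prob C p A * (if v \<in> A then lat d r \<pi> A v else 0))
     = p v * Gl d r (map (\<lambda>u. (u, p u)) (takeWhile (\<lambda>u. u \<noteq> v) \<pi>)) v"
proof -
  define pre where "pre = takeWhile (\<lambda>u. u \<noteq> v) \<pi>"
  define T where "T = insert v (set pre)"
  define h where "h B = (if v \<in> B then path_len d (r # filter (\<lambda>u. u \<in> B) pre @ [v]) else 0)" for B
  have vpre: "v \<notin> set pre" unfolding pre_def by (auto dest: set_takeWhileD)
  have dpre: "distinct pre" unfolding pre_def using assms distinct_tw by auto
  have TC: "T \<subseteq> C" unfolding T_def pre_def using assms by (auto dest: set_takeWhileD)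
  have 1: "(if v \<in> A then lat d r \<pi> A v else 0) = h (A \<inter> T)" for A
  proof (cases "v \<in> A")
    case True
    have "filter (\<lambda>u. u \<in> A) pre = filter (\<lambda>u. u \<in> A \<inter> T) pre"
      unfolding T_def by (rule filter_cong) auto
    then show ?thesis using True unfolding lat_def h_def pre_def T_def by (simp add: tw_filter)
  next
    case False then show ?thesis unfolding h_def T_def by simp
  qed
  have "(\<Sum>A\<in>Pow C. act_prob C p A * (if v \<in> A then lat d r \<pi> A v else 0))
      = (\<Sum>A\<in>Pow C. act_prob C p A * h (A \<inter> T))" by (simp add: 1)
  also have "\<dots> = (\<Sum>B\<in>Pow T. act_prob T p B * h B)" by (rule marginal2[OF assms(1) TC])
  also have "\<dots> = (\<Sum>B\<in>Pow (set pre). act_prob T p B * h B) + (\<Sum>B\<in>Pow (set pre). act_prob T p (insert v B) * h (insert v B))"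
    unfolding T_def by (rule sum_Pow_insert) (use vpre in auto)
  also have "(\<Sum>B\<in>Pow (set pre). act_prob T p B * h B) = 0"
    using vpre by (intro sum.neutral) (auto simp: h_def)
  also have "(\<Sum>B\<in>Pow (set pre). act_prob T p (insert v B) * h (insert v B))
     = (\<Sum>B\<in>Pow (set pre). p v * (act_prob (set pre) p B * path_len d (r # filter (\<lambda>u. u \<in> B) pre @ [v])))"
  proof (rule sum.cong[OF refl])
    fix B assume B: "B \<in> Pow (set pre)"
    have "filter (\<lambda>u. u \<in> insert v B) pre = filter (\<lambda>u. u \<in> B) pre"
      using vpre by (intro filter_cong) auto
    then show "act_prob T p (insert v B) * h (insert v B) = p v * (act_prob (set pre) p B * path_len d (r # filter (\<lambda>u. u \<in> B) pre @ [v]))"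
      using B vpre unfolding T_def h_def by (simp add: act_prob_ins_in)
  qed
  also have "\<dots> = p v * Gl d r (map (\<lambda>u. (u, p u)) pre) v"
    by (simp add: sum_distrib_left[symmetric] path_expect[OF dpre])
  finally show ?thesis unfolding pre_def by simp
qed

lemma exp_lat_formula:
  assumes "finite C" "distinct \<pi>" "set \<pi> \<subseteq> C"
  shows "exp_lat d r C p \<pi> = (\<Sum>v\<in>set \<pi>. p v * Gl d r (map (\<lambda>u. (u, p u)) (takeWhile (\<lambda>u. u \<noteq> v) \<pi>)) v)"
proof -
  have "exp_lat d r C p \<pi> = (\<Sum>A\<in>Pow C. act_prob C p A * (\<Sum>v\<in>set \<pi>. if v \<in> A then lat d r \<pi> A v else 0))"
    unfolding exp_lat_def
    by (rule sum.cong[OF refl], subst Int_commute) (simp add: sum.inter_restrict)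
  also have "\<dots> = (\<Sum>v\<in>set \<pi>. \<Sum>A\<in>Pow C. act_prob C p A * (if v \<in> A then lat d r \<pi> A v else 0))"
    by (simp add: sum_distrib_left sum.swap[of _ "set \<pi>"])
  also have "\<dots> = (\<Sum>v\<in>set \<pi>. p v * Gl d r (map (\<lambda>u. (u, p u)) (takeWhile (\<lambda>u. u \<noteq> v) \<pi>)) v)"
    by (rule sum.cong[OF refl], rule per_vertex[OF assms]) 
  finally show ?thesis .
qed



fun Dl :: "('b \<Rightarrow> 'b \<Rightarrow> real) \<Rightarrow> 'b \<Rightarrow> ('b \<times> real) list \<Rightarrow> 'b \<Rightarrow> real" where
  "Dl d s [] v = d s v"
| "Dl d s ((x,a)#xs) v = a * d s x + (1 - a) * Dl d s xs v"

fun Rl :: "('b \<Rightarrow> 'b \<Rightarrow> real) \<Rightarrow> ('b \<times> real) list \<Rightarrow> 'b \<Rightarrow> real" where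
  "Rl d [] v = 0"
| "Rl d ((x,a)#xs) v = a * Gl d x xs v + (1 - a) * Rl d xs v"

lemma GDR: "Gl d s xs v = Dl d s xs v + Rl d xs v"
  by (induction xs arbitrary: s) (auto simp: algebra_simps)

definition okP :: "'b set \<Rightarrow> ('b \<Rightarrow> 'b \<Rightarrow> real) \<Rightarrow> bool" where
  "okP P d \<longleftrightarrow> (\<forall>a\<in>P. \<forall>b\<in>P. 0 \<le> d a b) \<and> (\<forall>a\<in>P. \<forall>b\<in>P. \<forall>c\<in>P. d a c \<le> d a b + d b c)"

definition okL :: "'b set \<Rightarrow> ('b \<times> real) list \<Rightarrow> bool" where
  "okL P xs \<longleftrightarrow> (\<forall>(x,a)\<in>set xs. x \<in> P \<and> 0 \<le> a \<and> a \<le> 1)"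

lemma okL_Cons[simp]: "okL P ((x,a)#xs) \<longleftrightarrow> x \<in> P \<and> 0 \<le> a \<and> a \<le> 1 \<and> okL P xs"
  by (auto simp: okL_def)

lemma Gl_lower:
  assumes "okP P d" "okL P xs" "s \<in> P" "v \<in> P"
  shows "d s v \<le> Gl d s xs v"
  using assms(2,3)
proof (induction xs arbitrary: s)
  case Nil then show ?case by simp
next
  case (Cons y xs)
  obtain x a where y: "y = (x,a)" by force
  have h: "x \<in> P" "0 \<le> a" "a \<le> 1" "okL P xs" using Cons.prems y by auto
  have i1: "d x v \<le> Gl d x xs v" using Cons.IH h Cons.prems by auto
  have i2: "d s v \<le> Gl d s xs v" using Cons.IH h Cons.prems by auto
  have t: "d s v \<le> d s x + d x v" using assms(1,4) h Cons.prems unfolding okP_def by auto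
  have "a * d s v \<le> a * (d s x + Gl d x xs v)" using t i1 h by (intro mult_left_mono) auto
  moreover have "(1 - a) * d s v \<le> (1 - a) * Gl d s xs v" using i2 h by (intro mult_left_mono) auto
  ultimately show ?case using y by (simp add: algebra_simps)
qed

lemma Gl_nonneg:
  assumes "okP P d" "okL P xs" "s \<in> P" "v \<in> P"
  shows "0 \<le> Gl d s xs v"
  using Gl_lower[OF assms] assms unfolding okP_def by force

lemma Dl_nonneg:
  assumes "okP P d" "okL P xs" "s \<in> P" "v \<in> P"
  shows "0 \<le> Dl d s xs v"
  using assms(2)
proof (induction xs)
  case Nil then show ?case using assms unfolding okP_def by simp
next
  case (Cons y xs)
  obtain x a where y: "y = (x,a)" by force
  then show ?case using Cons assms unfolding okP_def by simp
qed

lemma Gl_mono: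
  assumes "okP P d" "okL P xs" "s \<in> P" "v \<in> P" "x \<in> P"
  shows "Gl d s xs v \<le> d s x + Gl d x xs v"
  using assms(2,3,5)
proof (induction xs arbitrary: s x)
  case Nil then show ?case using assms unfolding okP_def by simp
next
  case (Cons y xs)
  obtain z a where y: "y = (z,a)" by force
  have h: "z \<in> P" "0 \<le> a" "a \<le> 1" "okL P xs" using Cons.prems y by auto
  have t: "d s z \<le> d s x + d x z" using assms(1) h Cons.prems unfolding okP_def by auto
  have i: "Gl d s xs v \<le> d s x + Gl d x xs v" using Cons.IH h Cons.prems by auto
  have "a * (d s z + Gl d z xs v) \<le> a * (d s x + d x z + Gl d z xs v)" using t h by (intro mult_left_mono) auto
  moreover have "(1 - a) * Gl d s xs v \<le> (1 - a) * (d s x + Gl d x xs v)" using i h by (intro mult_left_mono) auto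
  ultimately show ?case using y by (simp add: algebra_simps)
qed

lemma okL_map: "okL P (map (\<lambda>u. (u, p u)) us) \<longleftrightarrow> (\<forall>u\<in>set us. u \<in> P \<and> 0 \<le> p u \<and> p u \<le> 1)"
  by (auto simp: okL_def)

lemma thinning:
  assumes P: "okP P d" and b: "0 \<le> \<beta>" "\<beta> \<le> 1"
    and pq: "\<forall>u\<in>set us. u \<in> P \<and> 0 \<le> p u \<and> p u \<le> 1 \<and> 0 \<le> q u \<and> q u \<le> 1 \<and> \<beta> * p u \<le> q u"
    and sv: "s \<in> P" "v \<in> P"
  shows "\<beta>^2 * Gl d s (map (\<lambda>u. (u, p u)) us) v + (\<beta> - \<beta>^2) * Dl d s (map (\<lambda>u. (u, p u)) us) v
         \<le> Gl d s (map (\<lambda>u. (u, q u)) us) v"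
  using pq sv(1)
proof (induction us arbitrary: s)
  case Nil
  have "0 \<le> d s v" using P Nil sv unfolding okP_def by auto
  moreover have "\<beta>^2 + (\<beta> - \<beta>^2) \<le> 1" using b by simp
  ultimately have "(\<beta>^2 + (\<beta> - \<beta>^2)) * d s v \<le> 1 * d s v" by (intro mult_right_mono) auto
  then show ?case by (simp add: algebra_simps)
next
  case (Cons x us)
  let ?P = "map (\<lambda>u. (u, p u)) us" and ?Q = "map (\<lambda>u. (u, q u)) us"
  define a where "a = p x"
  define c where "c = q x"
  have h: "x \<in> P" "0 \<le> a" "a \<le> 1" "0 \<le> c" "c \<le> 1" "\<beta> * a \<le> c"
    using Cons.prems unfolding a_def c_def by auto
  have okQ: "okL P ?Q" and okPP: "okL P ?P" using Cons.prems by (auto simp: okL_map)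
  have M: "Gl d s ?Q v \<le> d s x + Gl d x ?Q v" by (rule Gl_mono[OF P okQ Cons.prems(2) sv(2) h(1)])
  have IH1: "\<beta>^2 * Gl d x ?P v + (\<beta> - \<beta>^2) * Dl d x ?P v \<le> Gl d x ?Q v"
    using Cons.IH Cons.prems h by auto
  have IH2: "\<beta>^2 * Gl d s ?P v + (\<beta> - \<beta>^2) * Dl d s ?P v \<le> Gl d s ?Q v"
    using Cons.IH Cons.prems h by auto
  have Ds: "0 \<le> Dl d s ?P v" by (rule Dl_nonneg[OF P okPP Cons.prems(2) sv(2)])
  have dsx: "0 \<le> d s x" using P h Cons.prems unfolding okP_def by auto
  define GxQ where "GxQ = Gl d x ?Q v"
  define GsQ where "GsQ = Gl d s ?Q v"
  define Dx where "Dx = Dl d x ?P v"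
  define Dsv where "Dsv = Dl d s ?P v"
  define R where "R = Rl d ?P v"
  have GxP: "Gl d x ?P v = Dx + R" unfolding Dx_def R_def by (rule GDR)
  have GsP: "Gl d s ?P v = Dsv + R" unfolding Dsv_def R_def by (rule GDR)
  have LHS: "Gl d s (map (\<lambda>u. (u, q u)) (x # us)) v = c * (d s x + GxQ) + (1 - c) * GsQ"
    unfolding GxQ_def GsQ_def c_def by simp
  have RHS: "\<beta>^2 * Gl d s (map (\<lambda>u. (u, p u)) (x # us)) v + (\<beta> - \<beta>^2) * Dl d s (map (\<lambda>u. (u, p u)) (x # us)) v
      = \<beta>^2 * (a * (d s x + Dx + R) + (1 - a) * (Dsv + R)) + (\<beta> - \<beta>^2) * (a * d s x + (1 - a) * Dsv)"
    unfolding a_def using GxP GsP Dsv_def by (simp add: algebra_simps)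
  define ba where "ba = \<beta> * a"
  define X where "X = \<beta>^2 * (Dx + R) + (\<beta> - \<beta>^2) * Dx"
  define Y where "Y = \<beta>^2 * (Dsv + R) + (\<beta> - \<beta>^2) * Dsv"
  have s1: "ba * (d s x + GxQ) + (1 - ba) * GsQ \<le> c * (d s x + GxQ) + (1 - c) * GsQ"
  proof -
    have "0 \<le> (c - ba) * (d s x + GxQ - GsQ)" using h M unfolding GxQ_def GsQ_def ba_def by (intro mult_nonneg_nonneg) auto
    then show ?thesis by (simp add: algebra_simps)
  qed
  have ba: "0 \<le> ba" "ba \<le> 1" using b h unfolding ba_def by (auto intro: mult_le_one)
  have s2: "ba * X \<le> ba * GxQ"
    using IH1 GxP ba unfolding GxQ_def Dx_def X_def by (intro mult_left_mono) auto
  have s3: "(1 - ba) * Y \<le> (1 - ba) * GsQ"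
    using IH2 GsP ba unfolding GsQ_def Dsv_def Y_def by (intro mult_left_mono) auto
  have s4: "0 \<le> a * \<beta> * (1 - \<beta>) * Dsv" using h b Ds unfolding Dsv_def by auto
  have key: "ba * (d s x + X) + (1 - ba) * Y
     = \<beta>^2 * (a * (d s x + Dx + R) + (1 - a) * (Dsv + R)) + (\<beta> - \<beta>^2) * (a * d s x + (1 - a) * Dsv) + a * \<beta> * (1 - \<beta>) * Dsv"
    unfolding ba_def X_def Y_def by (simp add: algebra_simps power2_eq_square)
  have e1: "ba * (d s x + X) = ba * d s x + ba * X" by (rule distrib_left)
  have e2: "ba * (d s x + GxQ) = ba * d s x + ba * GxQ" by (rule distrib_left)
  show ?case unfolding LHS RHS using s1 s2 s3 s4 key e1 e2 by linarith
qed



lemma Gl_J: "Gl (J_dist d) s xs y = Gl d (fst s) (map (\<lambda>(x,a). (fst x, a)) xs) (fst y)"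
  by (induction xs arbitrary: s) (auto simp: J_dist_def)

lemma Gl_at_v:
  assumes "\<forall>(x,a)\<in>set ys. x = v" "d v v = 0"
  shows "Gl d s ys v = d s v"
  using assms(1) by (induction ys arbitrary: s) (auto simp: assms(2) algebra_simps)

lemma Gl_drop_tail:
  assumes "\<forall>(x,a)\<in>set ys. x = v" "d v v = 0"
  shows "Gl d s (xs @ ys) v = Gl d s xs v"
  by (induction xs arbitrary: s) (auto simp: Gl_at_v[where d=d and v=v, OF assms])

lemma Gl_merge2:
  assumes "d u u = 0"
  shows "Gl d s ((u,a)#(u,b)#rest) v = Gl d s ((u, 1-(1-a)*(1-b))#rest) v"
  using assms by (simp add: algebra_simps)

lemma Gl_block:
  assumes "L \<noteq> []" "\<forall>x\<in>set L. fst x = u" "d u u = 0"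
  shows "Gl d s (map (\<lambda>x. (fst x, c)) L @ rest) v = Gl d s ((u, 1 - (1 - c) ^ length L) # rest) v"
  using assms(1,2)
proof (induction L arbitrary: s)
  case Nil then show ?case by simp
next
  case (Cons x L)
  show ?case
  proof (cases "L = []")
    case True then show ?thesis using Cons by (cases x) simp
  next
    case False
    let ?X = "map (\<lambda>x. (fst x, c)) L @ rest"
    have fx: "fst x = u" using Cons by simp
    have IH: "\<And>s. Gl d s ?X v = Gl d s ((u, 1 - (1 - c) ^ length L) # rest) v"
      using Cons False by auto
    have "Gl d s (map (\<lambda>x. (fst x, c)) (x # L) @ rest) v = c * (d s u + Gl d u ?X v) + (1 - c) * Gl d s ?X v"
      using fx by simp
    also have "\<dots> = Gl d s ((u,c) # (u, 1 - (1 - c) ^ length L) # rest) v"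
      by (simp only: IH Gl.simps)
    also have "\<dots> = Gl d s ((u, 1 - (1 - c) ^ length (x # L)) # rest) v"
    proof -
      have e: "1 - (1 - c) * (1 - (1 - (1 - c) ^ length L)) = 1 - (1 - c) ^ length (x # L)" by simp
      show ?thesis by (subst Gl_merge2[where d=d and u=u, OF assms(3)]) (simp only: e)
    qed
    finally show ?thesis .
  qed
qed

lemma Gl_blocks:
  assumes "\<forall>u\<in>set us. B u \<noteq> [] \<and> (\<forall>x\<in>set (B u). fst x = u) \<and> d u u = 0"
  shows "Gl d s (map (\<lambda>x. (fst x, c)) (concat (map B us)) @ rest) v
       = Gl d s (map (\<lambda>u. (u, 1 - (1 - c) ^ length (B u))) us @ rest) v"
  using assms
proof (induction us arbitrary: s)
  case Nil then show ?case by simp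
next
  case (Cons u us)
  let ?X = "map (\<lambda>x. (fst x, c)) (concat (map B us)) @ rest"
  let ?Y = "map (\<lambda>u. (u, 1 - (1 - c) ^ length (B u))) us @ rest"
  have IH: "\<And>s. Gl d s ?X v = Gl d s ?Y v" using Cons by auto
  have "Gl d s (map (\<lambda>x. (fst x, c)) (concat (map B (u # us))) @ rest) v
      = Gl d s (map (\<lambda>x. (fst x, c)) (B u) @ ?X) v" by simp
  also have "\<dots> = Gl d s ((u, 1 - (1 - c) ^ length (B u)) # ?X) v"
    using Cons.prems by (intro Gl_block) auto
  also have "\<dots> = Gl d s ((u, 1 - (1 - c) ^ length (B u)) # ?Y) v"
    by (simp only: Gl.simps IH)
  finally show ?case by simp
qed

lemma tw_concat:
  assumes "distinct \<sigma>" "v \<in> set \<sigma>" "y \<in> set (B v)" "\<forall>u\<in>set \<sigma>. \<forall>z\<in>set (B u). fst z = u"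
  shows "takeWhile (\<lambda>z. z \<noteq> y) (concat (map B \<sigma>)) = concat (map B (takeWhile (\<lambda>u. u \<noteq> v) \<sigma>)) @ takeWhile (\<lambda>z. z \<noteq> y) (B v)"
  using assms
proof (induction \<sigma>)
  case Nil then show ?case by simp
next
  case (Cons u \<sigma>)
  show ?case
  proof (cases "u = v")
    case True then show ?thesis using Cons.prems by simp
  next
    case False
    have "y \<notin> set (B u)" using Cons.prems False by auto
    then have "\<And>z. z \<in> set (B u) \<Longrightarrow> z \<noteq> y" by auto
    then show ?thesis using Cons False by simp
  qed
qed

lemma consec_tl: "consecutive (x # L) \<Longrightarrow> consecutive L"
  unfolding consecutive_def
proof (intro allI impI)
  fix i j k
  assume A: "\<forall>i j k. i \<le> j \<and> j \<le> k \<and> k < length (x # L) \<and> fst ((x # L) ! i) = fst ((x # L) ! k) \<longrightarrow> fst ((x # L) ! j) = fst ((x # L) ! i)"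
    and B: "i \<le> j \<and> j \<le> k \<and> k < length L \<and> fst (L ! i) = fst (L ! k)"
  show "fst (L ! j) = fst (L ! i)" using A[rule_format, of "Suc i" "Suc j" "Suc k"] B by simp
qed

lemma consec_hd:
  assumes "consecutive (x # L)" "fst x \<in> fst ` set L"
  shows "L \<noteq> [] \<and> fst (hd L) = fst x"
proof -
  obtain k where k: "k < length L" "fst (L ! k) = fst x" using assms(2) by (metis imageE in_set_conv_nth)
  then have ne: "L \<noteq> []" by auto
  have "fst ((x # L) ! 1) = fst ((x # L) ! 0)"
    using assms(1) k unfolding consecutive_def
    by (metis One_nat_def Suc_le_mono Suc_mono le0 length_Cons nth_Cons_0 nth_Cons_Suc)
  then show ?thesis using ne by (simp add: hd_conv_nth)
qed

lemma consec_decomp: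
  assumes "consecutive L"
  shows "\<exists>\<sigma> B. L = concat (map B \<sigma>) \<and> distinct \<sigma> \<and> \<sigma> = remdups (map fst L) \<and>
          (\<forall>u\<in>set \<sigma>. B u \<noteq> [] \<and> (\<forall>y\<in>set (B u). fst y = u))"
  using assms
proof (induction L)
  case Nil then show ?case by auto
next
  case (Cons x L)
  obtain \<sigma> B where IH: "L = concat (map B \<sigma>)" "distinct \<sigma>" "\<sigma> = remdups (map fst L)"
      "\<forall>u\<in>set \<sigma>. B u \<noteq> [] \<and> (\<forall>y\<in>set (B u). fst y = u)"
    using Cons consec_tl by blast
  have setsig: "set \<sigma> = fst ` set L" using IH(3) by simp
  show ?case
  proof (cases "fst x \<in> set \<sigma>")
    case False
    let ?B = "B(fst x := [x])"
    have "concat (map ?B \<sigma>) = concat (map B \<sigma>)" using False by (intro arg_cong[where f=concat] map_cong) auto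
    then have "x # L = concat (map ?B (fst x # \<sigma>))" using IH(1) by simp
    moreover have "fst x # \<sigma> = remdups (map fst (x # L))" using False setsig IH(3) by auto
    moreover have "\<forall>u\<in>set (fst x # \<sigma>). ?B u \<noteq> [] \<and> (\<forall>y\<in>set (?B u). fst y = u)" using IH(4) by auto
    moreover have "distinct (fst x # \<sigma>)" using IH(2) False by simp
    ultimately show ?thesis by (intro exI[of _ "fst x # \<sigma>"] exI[of _ ?B]) blast
  next
    case True
    then have hd: "L \<noteq> [] \<and> fst (hd L) = fst x" using consec_hd[OF Cons.prems] setsig by auto
    obtain w \<sigma>' where sw: "\<sigma> = w # \<sigma>'" using True by (cases \<sigma>) auto
    have "hd L = hd (B w)" using IH(1,4) sw by simp
    moreover have "hd (B w) \<in> set (B w)" using IH(4) sw by simp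
    ultimately have "fst (hd L) = w" using IH(4) sw by simp
    then have wx: "w = fst x" using hd by simp
    let ?B = "B(fst x := x # B (fst x))"
    have "w \<notin> set \<sigma>'" using IH(2) sw by simp
    then have "concat (map ?B \<sigma>') = concat (map B \<sigma>')" using wx by (intro arg_cong[where f=concat] map_cong) auto
    then have "x # L = concat (map ?B \<sigma>)" using IH(1) sw wx by simp
    moreover have "\<sigma> = remdups (map fst (x # L))" using True setsig IH(3) by auto
    moreover have "\<forall>u\<in>set \<sigma>. ?B u \<noteq> [] \<and> (\<forall>y\<in>set (?B u). fst y = u)" using IH(4) by auto
    ultimately show ?thesis using IH(2) by (intro exI[of _ \<sigma>] exI[of _ ?B]) blast
  qed
qed



lemma sum_list_concat_map: "sum_list (map f (concat (map B \<sigma>))) = sum_list (map (\<lambda>u. sum_list (map f (B u))) \<sigma>)"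
  by (induction \<sigma>) auto

lemma J_formula:
  fixes B :: "'a \<Rightarrow> ('a \<times> nat) list" and \<sigma> :: "'a list"
  assumes dist: "distinct (concat (map B \<sigma>))" "distinct \<sigma>"
    and Bp: "\<forall>u\<in>set \<sigma>. B u \<noteq> [] \<and> (\<forall>y\<in>set (B u). fst y = u) \<and> d u u = 0"
    and C: "finite C" "set (concat (map B \<sigma>)) \<subseteq> C"
  shows "exp_lat (J_dist d) s C (\<lambda>_. c) (concat (map B \<sigma>))
     = (\<Sum>u\<in>set \<sigma>. real (length (B u)) * c * Gl d (fst s) (map (\<lambda>w. (w, 1 - (1 - c) ^ length (B w))) (takeWhile (\<lambda>w. w \<noteq> u) \<sigma>)) u)"
proof -
  let ?L = "concat (map B \<sigma>)"
  define f where "f y = c * Gl (J_dist d) s (map (\<lambda>u. (u, c)) (takeWhile (\<lambda>u. u \<noteq> y) ?L)) y" for y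
  define V where "V u = Gl d (fst s) (map (\<lambda>w. (w, 1 - (1 - c) ^ length (B w))) (takeWhile (\<lambda>w. w \<noteq> u) \<sigma>)) u" for u
  have fy: "f y = c * V u" if u: "u \<in> set \<sigma>" and y: "y \<in> set (B u)" for u y
  proof -
    have fyu: "fst y = u" using Bp u y by auto
    have duu: "d u u = 0" using Bp u by auto
    have tw: "takeWhile (\<lambda>z. z \<noteq> y) ?L = concat (map B (takeWhile (\<lambda>w. w \<noteq> u) \<sigma>)) @ takeWhile (\<lambda>z. z \<noteq> y) (B u)"
      using tw_concat[where B=B and \<sigma>=\<sigma> and v=u and y=y] dist(2) u y Bp by auto
    have m: "map (\<lambda>(x, a). (fst x, a)) (map (\<lambda>u. (u, c)) xs) = map (\<lambda>x. (fst x, c)) xs" for xs :: "('a \<times> nat) list"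
      by simp
    have tail: "\<forall>(x,a)\<in>set (map (\<lambda>x. (fst x, c)) (takeWhile (\<lambda>z. z \<noteq> y) (B u))). x = u"
      using Bp u by (auto dest: set_takeWhileD)
    have pre: "\<forall>w\<in>set (takeWhile (\<lambda>w. w \<noteq> u) \<sigma>). B w \<noteq> [] \<and> (\<forall>x\<in>set (B w). fst x = w) \<and> d w w = 0"
      using Bp by (auto dest: set_takeWhileD)
    have "Gl (J_dist d) s (map (\<lambda>u. (u, c)) (takeWhile (\<lambda>u. u \<noteq> y) ?L)) y
        = Gl d (fst s) (map (\<lambda>x. (fst x, c)) (takeWhile (\<lambda>u. u \<noteq> y) ?L)) u"
      by (simp only: Gl_J m fyu)
    also have "\<dots> = Gl d (fst s) (map (\<lambda>x. (fst x, c)) (concat (map B (takeWhile (\<lambda>w. w \<noteq> u) \<sigma>))) @ map (\<lambda>x. (fst x, c)) (takeWhile (\<lambda>z. z \<noteq> y) (B u))) u"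
      by (simp only: tw map_append)
    also have "\<dots> = Gl d (fst s) (map (\<lambda>x. (fst x, c)) (concat (map B (takeWhile (\<lambda>w. w \<noteq> u) \<sigma>)))) u"
      by (rule Gl_drop_tail[where d=d and v=u, OF tail duu])
    also have "\<dots> = V u"
      using Gl_blocks[where rest="[]" and d=d and B=B and s="fst s" and c=c and v=u, OF pre] unfolding V_def by simp
    finally show ?thesis unfolding f_def by simp
  qed
  have "exp_lat (J_dist d) s C (\<lambda>_. c) ?L = (\<Sum>y\<in>set ?L. f y)"
    unfolding f_def by (rule exp_lat_formula[OF C(1) dist(1) C(2)])
  also have "\<dots> = sum_list (map f ?L)" by (rule sum_list_distinct_conv_sum_set[OF dist(1), symmetric])
  also have "\<dots> = sum_list (map (\<lambda>u. sum_list (map f (B u))) \<sigma>)" by (rule sum_list_concat_map)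
  also have "\<dots> = sum_list (map (\<lambda>u. real (length (B u)) * c * V u) \<sigma>)"
  proof (rule arg_cong[where f=sum_list], rule map_cong[OF refl])
    fix u assume u: "u \<in> set \<sigma>"
    have mf: "map f (B u) = map (\<lambda>_. c * V u) (B u)" using fy[OF u] by (intro map_cong) auto
    show "sum_list (map f (B u)) = real (length (B u)) * c * V u"
      unfolding mf sum_list_triv by simp
  qed
  also have "\<dots> = (\<Sum>u\<in>set \<sigma>. real (length (B u)) * c * V u)"
    by (rule sum_list_distinct_conv_sum_set[OF dist(2)])
  finally show ?thesis unfolding V_def .
qed



lemma q_bounds:
  fixes pj pu :: real and t :: nat
  assumes "0 < pj" "pj \<le> 1" "0 \<le> pu" "pu \<le> 1" "pu \<le> real t * pj"
  shows "0 \<le> 1 - (1 - pj) ^ t" "1 - (1 - pj) ^ t \<le> 1" "pu / 2 \<le> 1 - (1 - pj) ^ t"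
    "1 - (1 - pj) ^ t \<le> real t * pj"
proof -
  have a: "0 \<le> 1 - pj" "1 - pj \<le> 1" using assms by auto
  show "0 \<le> 1 - (1 - pj) ^ t" using power_le_one[OF a] by simp
  show "1 - (1 - pj) ^ t \<le> 1" using a by simp
  have "(1 - pj) ^ t \<le> exp (- pj) ^ t"
    using a exp_ge_add_one_self[of "- pj"] by (intro power_mono) auto
  also have "\<dots> = exp (real t * (- pj))" by (rule exp_of_nat_mult[symmetric])
  also have "\<dots> \<le> exp (- pu)" using assms by simp
  also have "\<dots> \<le> 1 / (1 + pu)"
  proof -
    have "1 + pu \<le> exp pu" by (rule exp_ge_add_one_self)
    then have "inverse (exp pu) \<le> inverse (1 + pu)" using assms by (intro le_imp_inverse_le) auto
    then show ?thesis by (simp add: exp_minus divide_inverse)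
  qed
  finally have b: "(1 - pj) ^ t \<le> 1 / (1 + pu)" .
  have "pu / 2 \<le> 1 - 1 / (1 + pu)" using assms mult_left_le[of pu pu] by (simp add: field_simps)
  then show "pu / 2 \<le> 1 - (1 - pj) ^ t" using b by linarith
  have "1 + real t * (- pj) \<le> (1 + (- pj)) ^ t" using assms by (intro Bernoulli_inequality) auto
  then show "1 - (1 - pj) ^ t \<le> real t * pj" by simp
qed

lemma e_bound: "(4::real) \<le> (exp 1 / (exp 1 - 1)) ^ 4"
proof -
  have e3: "exp 1 \<le> (3::real)" by (rule exp_le)
  have e1: "1 < exp (1::real)" by simp
  have h: "(3/2::real) \<le> exp 1 / (exp 1 - 1)" using e3 e1 by (simp add: field_simps)
  have "(3/2::real) ^ 4 \<le> (exp 1 / (exp 1 - 1)) ^ 4" by (rule power_mono[OF h]) simp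
  moreover have "(4::real) \<le> (3/2) ^ 4" by (simp add: power_divide)
  ultimately show ?thesis by linarith
qed

lemma eps_lim: "(\<lambda>n. (1 + 1 / real n) ^ 3 - 1) \<longlonglongrightarrow> (0::real)"
proof -
  have "(\<lambda>n. 1 / real n) \<longlonglongrightarrow> (0::real)" using lim_inverse_n by (simp add: divide_inverse)
  then have "(\<lambda>n. (1 + 1 / real n) ^ 3 - 1) \<longlonglongrightarrow> (1 + 0) ^ 3 - (1::real)"
    by (intro tendsto_intros)
  then show ?thesis by simp
qed

lemma distinct_concat_blocks:
  assumes "distinct \<tau>" "\<forall>u. distinct (B u) \<and> (\<forall>y\<in>set (B u). fst y = u)"
  shows "distinct (concat (map B \<tau>))"
  using assms by (induction \<tau>) (auto, metis fst_conv)

lemma exp_lat_nonneg: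
  assumes "finite C" "distinct \<pi>" "set \<pi> \<subseteq> C" "okP P d" "set \<pi> \<subseteq> P" "r \<in> P"
    "\<forall>v\<in>set \<pi>. 0 \<le> p v \<and> p v \<le> 1"
  shows "0 \<le> exp_lat d r C p \<pi>"
proof -
  have "0 \<le> (\<Sum>v\<in>set \<pi>. p v * Gl d r (map (\<lambda>u. (u, p u)) (takeWhile (\<lambda>u. u \<noteq> v) \<pi>)) v)"
  proof (intro sum_nonneg mult_nonneg_nonneg)
    fix v assume v: "v \<in> set \<pi>"
    show "0 \<le> p v" using assms v by auto
    show "0 \<le> Gl d r (map (\<lambda>u. (u, p u)) (takeWhile (\<lambda>u. u \<noteq> v) \<pi>)) v"
      using assms v by (intro Gl_nonneg[where P=P]) (auto simp: okL_map dest: set_takeWhileD)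
  qed
  then show ?thesis using exp_lat_formula[OF assms(1-3)] by simp
qed



lemma okP_metric: "metric_on V d \<Longrightarrow> okP V d"
  unfolding metric_on_def okP_def by blast

lemma okP_J: "metric_on V d \<Longrightarrow> okP {y. fst y \<in> V} (J_dist d)"
  unfolding metric_on_def okP_def J_dist_def by auto

lemma main_nonempty:
  fixes V :: "'a set" and \<rho> :: real and \<pi>h :: "('a \<times> nat) list"
  assumes V: "finite V" "r \<in> V" "metric_on V d"
    and pr: "\<forall>v\<in>V - {r}. 0 \<le> p v \<and> p v \<le> 1"
    and mt: "\<pi>h \<in> master_tours (J_clients V r p)" and cons: "consecutive \<pi>h"
    and hyp: "exp_lat (J_dist d) (r, 0) (J_clients V r p) (\<lambda>_. J_prob V r p) \<pi>h
         \<le> \<rho> * opt (J_dist d) (r, 0) (J_clients V r p) (\<lambda>_. J_prob V r p)"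
    and Xne: "heavy V r p \<noteq> {}"
  shows "exp_lat d r (V - {r}) p (remdups (map fst \<pi>h))
         \<le> (1 + ((1 + 1 / real (card V)) ^ 3 - 1)) * (exp 1 / (exp 1 - 1)) ^ 4 * \<rho> * opt d r (heavy V r p) p"
proof -
  define n where "n = card V"
  define X where "X = heavy V r p"
  define pj where "pj = J_prob V r p"
  define t where "t = J_copies V r p"
  define Cj where "Cj = J_clients V r p"
  define q where "q u = 1 - (1 - pj) ^ t u" for u
  define optJ where "optJ = opt (J_dist d) (r, 0) Cj (\<lambda>_. pj)"
  define optX where "optX = opt d r X p"
  define expJ where "expJ \<tau> = exp_lat (J_dist d) (r, 0) Cj (\<lambda>_. pj) \<tau>" for \<tau>
  have okV: "okP V d" using okP_metric[OF V(3)] .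
  have duu: "\<And>u. u \<in> V \<Longrightarrow> d u u = 0" using V(3) unfolding metric_on_def by auto
  have dpos: "0 < d r u" if u: "u \<in> V" "u \<noteq> r" for u
  proof -
    have "0 \<le> d r u \<and> (d r u = 0 \<longleftrightarrow> r = u)" using V(3) V(2) u(1) unfolding metric_on_def by blast
    then show ?thesis using u(2) by auto
  qed
  have XV: "X \<subseteq> V - {r}" unfolding X_def heavy_def by auto
  have fX: "finite X" using XV V(1) finite_subset by auto
  have Xne': "X \<noteq> {}" using Xne unfolding X_def .
  have npos: "0 < real n" unfolding n_def using V(1,2) card_gt_0_iff by auto
  define m0 where "m0 = Min (p ` X)"
  have pX: "\<And>u. u \<in> X \<Longrightarrow> 1 / real n ^ 2 \<le> p u" unfolding X_def heavy_def n_def by auto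
  have p01: "\<And>u. u \<in> X \<Longrightarrow> 0 \<le> p u \<and> p u \<le> 1" using pr XV by auto
  have m0_le: "\<And>u. u \<in> X \<Longrightarrow> m0 \<le> p u" unfolding m0_def using fX by auto
  have m0_in: "m0 \<in> p ` X" unfolding m0_def using fX Xne' by (intro Min_in) auto
  have m0pos: "0 < m0" using m0_in pX npos
    by (smt (verit, best) divide_pos_pos image_iff zero_less_power)
  have pj_def': "pj = m0 / real n" unfolding pj_def J_prob_def m0_def X_def n_def by simp
  have pjpos: "0 < pj" using m0pos npos pj_def' by simp
  have pj_le: "\<And>u. u \<in> X \<Longrightarrow> pj \<le> p u / real n" using m0_le npos pj_def' by (simp add: divide_right_mono)
  have pj1: "pj \<le> 1"
  proof -
    obtain u where u: "u \<in> X" using Xne' by auto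
    have "0 < n" using npos by simp
    then have n1: "1 \<le> real n" by simp
    have "p u / real n \<le> p u / 1" using n1 p01[OF u] by (intro divide_left_mono) auto
    then show ?thesis using pj_le[OF u] p01[OF u] by linarith
  qed
  have t_real: "\<And>u. u \<in> X \<Longrightarrow> real (t u) = of_int \<lceil>p u / pj\<rceil>"
  proof -
    fix u assume u: "u \<in> X"
    have "0 \<le> p u / pj" using p01[OF u] pjpos by simp
    then have "0 \<le> \<lceil>p u / pj\<rceil>" by simp
    then show "real (t u) = of_int \<lceil>p u / pj\<rceil>" unfolding t_def J_copies_def pj_def by simp
  qed
  have t_lo: "\<And>u. u \<in> X \<Longrightarrow> p u \<le> real (t u) * pj"
  proof -
    fix u assume u: "u \<in> X"
    have "p u / pj \<le> real (t u)" using t_real[OF u] by simp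
    then show "p u \<le> real (t u) * pj" using pjpos by (simp add: divide_le_eq)
  qed
  have t_hi: "\<And>u. u \<in> X \<Longrightarrow> real (t u) * pj \<le> p u * (1 + 1 / real n)"
  proof -
    fix u assume u: "u \<in> X"
    have "real (t u) < p u / pj + 1" using t_real[OF u] by linarith
    then have "real (t u) * pj \<le> (p u / pj + 1) * pj" using pjpos by (intro mult_right_mono) auto
    also have "\<dots> = p u + pj" using pjpos by (simp add: field_simps)
    also have "\<dots> \<le> p u * (1 + 1 / real n)" using pj_le[OF u] by (simp add: algebra_simps)
    finally show "real (t u) * pj \<le> p u * (1 + 1 / real n)" .
  qed
  have t1: "\<And>u. u \<in> X \<Longrightarrow> 1 \<le> t u"
  proof -
    fix u assume u: "u \<in> X"
    have "0 < p u" using pX[OF u] npos by (smt (verit) divide_pos_pos zero_less_power)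
    then have "0 < real (t u) * pj" using t_lo[OF u] by linarith
    then have "0 < real (t u)" using pjpos by (simp add: zero_less_mult_iff)
    then show "1 \<le> t u" by simp
  qed
  have qb: "\<And>u. u \<in> X \<Longrightarrow> 0 \<le> q u \<and> q u \<le> 1 \<and> p u / 2 \<le> q u \<and> q u \<le> real (t u) * pj"
  proof -
    fix u assume u: "u \<in> X"
    have a: "0 \<le> p u" "p u \<le> 1" using p01[OF u] by auto
    show "0 \<le> q u \<and> q u \<le> 1 \<and> p u / 2 \<le> q u \<and> q u \<le> real (t u) * pj"
      unfolding q_def using q_bounds[OF pjpos pj1 a t_lo[OF u]] by simp
  qed
  have Cj_eq: "Cj = (SIGMA u:X. {1..t u})" unfolding Cj_def J_clients_def X_def t_def by simp
  have fCj: "finite Cj" unfolding Cj_eq using fX by auto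
  have dpi: "distinct \<pi>h" and spi: "set \<pi>h = Cj" using mt unfolding master_tours_def Cj_def by auto
  obtain \<sigma> B where dec: "\<pi>h = concat (map B \<sigma>)" "distinct \<sigma>" "\<sigma> = remdups (map fst \<pi>h)"
      "\<forall>u\<in>set \<sigma>. B u \<noteq> [] \<and> (\<forall>y\<in>set (B u). fst y = u)"
    using consec_decomp[OF cons] by blast
  have ssig: "set \<sigma> = X"
  proof -
    have "set \<sigma> = fst ` Cj" using dec(3) spi by simp
    also have "\<dots> = X" unfolding Cj_eq using t1 by force
    finally show ?thesis .
  qed
  have Bset: "\<And>u. u \<in> X \<Longrightarrow> set (B u) = Pair u ` {1..t u}"
  proof -
    fix u assume u: "u \<in> X"
    have "set (B u) \<subseteq> set \<pi>h" using u ssig dec(1) by auto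
    moreover have "\<forall>y\<in>set (B u). fst y = u" using dec(4) u ssig by auto
    moreover have "\<And>y. y \<in> set \<pi>h \<Longrightarrow> fst y = u \<Longrightarrow> y \<in> set (B u)"
    proof -
      fix y assume y: "y \<in> set \<pi>h" "fst y = u"
      obtain w where w: "w \<in> set \<sigma>" "y \<in> set (B w)" using y dec(1) by auto
      then have "w = u" using dec(4) y by auto
      then show "y \<in> set (B u)" using w by simp
    qed
    ultimately have "set (B u) = {y \<in> Cj. fst y = u}" using spi by auto
    also have "\<dots> = Pair u ` {1..t u}" unfolding Cj_eq using u by auto
    finally show "set (B u) = Pair u ` {1..t u}" .
  qed
  have lenB: "\<And>u. u \<in> X \<Longrightarrow> length (B u) = t u"
  proof -
    fix u assume u: "u \<in> X"
    have "distinct (B u)" using dpi dec(1) u ssig by (simp add: distinct_concat_iff)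
    then have "length (B u) = card (set (B u))" by (simp add: distinct_card)
    also have "\<dots> = card (Pair u ` {1..t u})" using Bset[OF u] by simp
    also have "\<dots> = t u" by (subst card_image) (auto simp: inj_on_def)
    finally show "length (B u) = t u" .
  qed
  define Gq where "Gq \<tau> u = Gl d r (map (\<lambda>w. (w, q w)) (takeWhile (\<lambda>w. w \<noteq> u) \<tau>)) u" for \<tau> u
  define Gp where "Gp \<tau> u = Gl d r (map (\<lambda>w. (w, p w)) (takeWhile (\<lambda>w. w \<noteq> u) \<tau>)) u" for \<tau> u
  define Dp where "Dp \<tau> u = Dl d r (map (\<lambda>w. (w, p w)) (takeWhile (\<lambda>w. w \<noteq> u) \<tau>)) u" for \<tau> u
  define Dq where "Dq \<tau> u = Dl d r (map (\<lambda>w. (w, q w)) (takeWhile (\<lambda>w. w \<noteq> u) \<tau>)) u" for \<tau> u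
  have tourX: "\<And>\<tau> u. set \<tau> \<subseteq> X \<Longrightarrow> u \<in> X \<Longrightarrow>
      0 \<le> Gq \<tau> u \<and> 0 \<le> Gp \<tau> u \<and> 0 \<le> Dp \<tau> u \<and> 0 \<le> Dq \<tau> u \<and> d r u \<le> Gq \<tau> u"
  proof -
    fix \<tau> u assume \<tau>: "set \<tau> \<subseteq> X" and u: "u \<in> X"
    have uV: "u \<in> V" using u XV by auto
    have okq: "okL V (map (\<lambda>w. (w, q w)) (takeWhile (\<lambda>w. w \<noteq> u) \<tau>))"
      using \<tau> XV qb by (auto simp: okL_map dest!: set_takeWhileD)
    have okp: "okL V (map (\<lambda>w. (w, p w)) (takeWhile (\<lambda>w. w \<noteq> u) \<tau>))"
      using \<tau> XV p01 by (auto simp: okL_map dest!: set_takeWhileD)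
    show "0 \<le> Gq \<tau> u \<and> 0 \<le> Gp \<tau> u \<and> 0 \<le> Dp \<tau> u \<and> 0 \<le> Dq \<tau> u \<and> d r u \<le> Gq \<tau> u"
      unfolding Gq_def Gp_def Dp_def Dq_def
      using Gl_nonneg[OF okV okq V(2) uV] Gl_nonneg[OF okV okp V(2) uV]
        Dl_nonneg[OF okV okp V(2) uV] Dl_nonneg[OF okV okq V(2) uV] Gl_lower[OF okV okq V(2) uV]
      by auto
  qed
  have thinX: "\<And>\<tau> u (\<beta>::real) (f::'a \<Rightarrow> real) g. set \<tau> \<subseteq> X \<Longrightarrow> u \<in> X \<Longrightarrow> 0 \<le> \<beta> \<Longrightarrow> \<beta> \<le> 1 \<Longrightarrow>
      (\<forall>w\<in>X. 0 \<le> f w \<and> f w \<le> 1 \<and> 0 \<le> g w \<and> g w \<le> 1 \<and> \<beta> * f w \<le> g w) \<Longrightarrow>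
      \<beta>^2 * Gl d r (map (\<lambda>w. (w, f w)) (takeWhile (\<lambda>w. w \<noteq> u) \<tau>)) u
        + (\<beta> - \<beta>^2) * Dl d r (map (\<lambda>w. (w, f w)) (takeWhile (\<lambda>w. w \<noteq> u) \<tau>)) u
      \<le> Gl d r (map (\<lambda>w. (w, g w)) (takeWhile (\<lambda>w. w \<noteq> u) \<tau>)) u"
  proof -
    fix \<tau> u and \<beta> :: real and f g :: "'a \<Rightarrow> real" assume \<tau>: "set \<tau> \<subseteq> X" and u: "u \<in> X" and b: "0 \<le> \<beta>" "\<beta> \<le> 1"
      and fg: "\<forall>w\<in>X. 0 \<le> f w \<and> f w \<le> 1 \<and> 0 \<le> g w \<and> g w \<le> 1 \<and> \<beta> * f w \<le> g w"
    have uV: "u \<in> V" using u XV by auto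
    show "\<beta>^2 * Gl d r (map (\<lambda>w. (w, f w)) (takeWhile (\<lambda>w. w \<noteq> u) \<tau>)) u
        + (\<beta> - \<beta>^2) * Dl d r (map (\<lambda>w. (w, f w)) (takeWhile (\<lambda>w. w \<noteq> u) \<tau>)) u
      \<le> Gl d r (map (\<lambda>w. (w, g w)) (takeWhile (\<lambda>w. w \<noteq> u) \<tau>)) u"
      using \<tau> XV fg by (intro thinning[OF okV b _ V(2) uV]) (auto dest!: set_takeWhileD)
  qed
  have Jform: "\<And>\<tau> B'. distinct \<tau> \<Longrightarrow> set \<tau> = X \<Longrightarrow> distinct (concat (map B' \<tau>)) \<Longrightarrow> set (concat (map B' \<tau>)) \<subseteq> Cj \<Longrightarrow>
      (\<forall>u\<in>X. B' u \<noteq> [] \<and> (\<forall>y\<in>set (B' u). fst y = u) \<and> length (B' u) = t u) \<Longrightarrow>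
      expJ (concat (map B' \<tau>)) = (\<Sum>u\<in>X. real (t u) * pj * Gq \<tau> u)"
  proof -
    fix \<tau> B' assume a: "distinct \<tau>" "set \<tau> = X" "distinct (concat (map B' \<tau>))" "set (concat (map B' \<tau>)) \<subseteq> Cj"
      "\<forall>u\<in>X. B' u \<noteq> [] \<and> (\<forall>y\<in>set (B' u). fst y = u) \<and> length (B' u) = t u"
    have Bp: "\<forall>u\<in>set \<tau>. B' u \<noteq> [] \<and> (\<forall>y\<in>set (B' u). fst y = u) \<and> d u u = 0"
      using a(2,5) XV duu by auto
    have "expJ (concat (map B' \<tau>)) = (\<Sum>u\<in>set \<tau>. real (length (B' u)) * pj *
        Gl d (fst (r, 0::nat)) (map (\<lambda>w. (w, 1 - (1 - pj) ^ length (B' w))) (takeWhile (\<lambda>w. w \<noteq> u) \<tau>)) u)"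
      unfolding expJ_def by (rule J_formula[where d=d and B=B' and \<sigma>=\<tau>, OF a(3,1) Bp fCj a(4)])
    also have "\<dots> = (\<Sum>u\<in>X. real (t u) * pj * Gq \<tau> u)"
    proof (rule sum.cong)
      show "set \<tau> = X" by (rule a(2))
    next
      fix u assume u: "u \<in> X"
      have mq: "map (\<lambda>w. (w, 1 - (1 - pj) ^ length (B' w))) (takeWhile (\<lambda>w. w \<noteq> u) \<tau>)
          = map (\<lambda>w. (w, q w)) (takeWhile (\<lambda>w. w \<noteq> u) \<tau>)"
        using a(2,5) unfolding q_def by (intro map_cong refl) (auto dest!: set_takeWhileD)
      show "real (length (B' u)) * pj * Gl d (fst (r, 0::nat)) (map (\<lambda>w. (w, 1 - (1 - pj) ^ length (B' w))) (takeWhile (\<lambda>w. w \<noteq> u) \<tau>)) u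
          = real (t u) * pj * Gq \<tau> u"
        using a(5) u unfolding Gq_def mq by simp
    qed
    finally show "expJ (concat (map B' \<tau>)) = (\<Sum>u\<in>X. real (t u) * pj * Gq \<tau> u)" .
  qed
  have Iform: "exp_lat d r C p \<tau> = (\<Sum>u\<in>X. p u * Gp \<tau> u)"
    if "finite C" "distinct \<tau>" "set \<tau> = X" "X \<subseteq> C" for \<tau> C
    using exp_lat_formula[of C \<tau> d r p] that unfolding Gp_def by simp
  have expJ_pi: "expJ \<pi>h = (\<Sum>u\<in>X. real (t u) * pj * Gq \<sigma> u)"
  proof -
    have e: "\<pi>h = concat (map B \<sigma>)" by (rule dec(1))
    have d1: "distinct (concat (map B \<sigma>))" using dpi unfolding e .
    have s1: "set (concat (map B \<sigma>)) \<subseteq> Cj" using spi unfolding e by simp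
    have b1: "\<forall>u\<in>X. B u \<noteq> [] \<and> (\<forall>y\<in>set (B u). fst y = u) \<and> length (B u) = t u"
      using dec(4) lenB unfolding ssig by auto
    show ?thesis unfolding e by (rule Jform[OF dec(2) ssig d1 s1 b1])
  qed
  have expI_pi: "exp_lat d r (V - {r}) p (remdups (map fst \<pi>h)) = (\<Sum>u\<in>X. p u * Gp \<sigma> u)"
    using Iform[OF _ dec(2) ssig XV] V(1) dec(3) by simp
  have a_step: "exp_lat d r (V - {r}) p (remdups (map fst \<pi>h)) \<le> 4 * expJ \<pi>h"
  proof -
    have "(\<Sum>u\<in>X. p u * Gp \<sigma> u) \<le> (\<Sum>u\<in>X. 4 * (real (t u) * pj * Gq \<sigma> u))"
    proof (rule sum_mono)
      fix u assume u: "u \<in> X"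
      have th: "(1/2)^2 * Gp \<sigma> u + (1/2 - (1/2)^2) * Dp \<sigma> u \<le> Gq \<sigma> u"
        unfolding Gp_def Dp_def Gq_def using qb p01 ssig u
        by (intro thinX[where \<beta>="1/2"]) auto
      have nn: "0 \<le> Gq \<sigma> u" "0 \<le> Gp \<sigma> u" "0 \<le> Dp \<sigma> u" using tourX[of \<sigma> u] ssig u by auto
      have h4: "(1/2::real)^2 = 1/4" by (simp add: power2_eq_square)
      have h5: "(1/2 - 1/4::real) = 1/4" by simp
      have g: "Gp \<sigma> u \<le> 4 * Gq \<sigma> u" using th nn unfolding h4 h5 by linarith
      have "p u * Gp \<sigma> u \<le> p u * (4 * Gq \<sigma> u)" using g p01[OF u] by (intro mult_left_mono) auto
      also have "\<dots> \<le> real (t u) * pj * (4 * Gq \<sigma> u)" using t_lo[OF u] nn by (intro mult_right_mono) auto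
      finally show "p u * Gp \<sigma> u \<le> 4 * (real (t u) * pj * Gq \<sigma> u)" by simp
    qed
    then show ?thesis using expJ_pi expI_pi by (simp add: sum_distrib_left)
  qed
  have expJ_pos: "0 < expJ \<pi>h"
  proof -
    have "0 < (\<Sum>u\<in>X. real (t u) * pj * Gq \<sigma> u)"
    proof (rule sum_pos[OF fX Xne'])
      fix u assume u: "u \<in> X"
      have "0 < d r u" using dpos u XV by auto
      then have "0 < Gq \<sigma> u" using tourX[of \<sigma> u] ssig u by auto
      moreover have "0 < real (t u)" using t1[OF u] by simp
      ultimately show "0 < real (t u) * pj * Gq \<sigma> u" using pjpos by simp
    qed
    then show ?thesis using expJ_pi by simp
  qed
  have fMT: "finite (master_tours Cj)"
    unfolding master_tours_def by (rule finite_subset[OF _ finite_subset_distinct[OF fCj]]) auto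
  have piMT: "\<pi>h \<in> master_tours Cj" using mt unfolding Cj_def .
  have optJ_nn: "0 \<le> optJ"
  proof -
    have "optJ \<in> expJ ` master_tours Cj" unfolding optJ_def opt_def expJ_def
      using fMT piMT by (intro Min_in) auto
    then obtain \<tau>' where \<tau>': "\<tau>' \<in> master_tours Cj" "optJ = expJ \<tau>'" by auto
    have "0 \<le> expJ \<tau>'" unfolding expJ_def
      using \<tau>'(1) fCj okP_J[OF V(3)] V(2) pjpos pj1 Cj_eq XV
      by (intro exp_lat_nonneg[where P="{y. fst y \<in> V}"]) (auto simp: master_tours_def)
    then show ?thesis using \<tau>' by simp
  qed
  have hyp': "expJ \<pi>h \<le> \<rho> * optJ" using hyp unfolding expJ_def optJ_def Cj_def pj_def .
  have rho_pos: "0 \<le> \<rho>"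
  proof (rule ccontr)
    assume "\<not> 0 \<le> \<rho>"
    then have "\<rho> * optJ \<le> 0" using optJ_nn by (simp add: mult_nonpos_nonneg)
    then show False using hyp' expJ_pos by linarith
  qed
  have fMTX: "finite (master_tours X)"
    unfolding master_tours_def by (rule finite_subset[OF _ finite_subset_distinct[OF fX]]) auto
  have neMTX: "master_tours X \<noteq> {}" using finite_distinct_list[OF fX] unfolding master_tours_def by auto
  have "optX \<in> (exp_lat d r X p) ` master_tours X" unfolding optX_def opt_def
    using fMTX neMTX by (intro Min_in) auto
  then obtain \<tau> where \<tau>: "\<tau> \<in> master_tours X" "optX = exp_lat d r X p \<tau>" by auto
  have d\<tau>: "distinct \<tau>" and s\<tau>: "set \<tau> = X" using \<tau>(1) unfolding master_tours_def by auto
  have optX_eq: "optX = (\<Sum>u\<in>X. p u * Gp \<tau> u)" using \<tau>(2) Iform[OF fX d\<tau> s\<tau>] by simp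
  have optX_nn: "0 \<le> optX"
    unfolding optX_eq using tourX[of \<tau>] s\<tau> p01 by (intro sum_nonneg mult_nonneg_nonneg) auto
  define B0 where "B0 u = map (Pair u) [1..<Suc (t u)]" for u
  have B0d: "\<forall>u. distinct (B0 u) \<and> (\<forall>y\<in>set (B0 u). fst y = u)" unfolding B0_def by (auto simp: distinct_map inj_on_def)
  have hatd: "distinct (concat (map B0 \<tau>))" by (rule distinct_concat_blocks[OF d\<tau> B0d])
  have sB0: "\<And>u. set (B0 u) = Pair u ` {1..t u}" unfolding B0_def by (simp only: set_map set_upt atLeastLessThanSuc_atLeastAtMost)
  have hats: "set (concat (map B0 \<tau>)) = Cj"
  proof -
    have "set (concat (map B0 \<tau>)) = (\<Union>u\<in>X. Pair u ` {1..t u})" using s\<tau> sB0 by simp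
    also have "\<dots> = Cj" unfolding Cj_eq by auto
    finally show ?thesis .
  qed
  have hatMT: "concat (map B0 \<tau>) \<in> master_tours Cj" unfolding master_tours_def using hatd hats by simp
  have optJ_le: "optJ \<le> expJ (concat (map B0 \<tau>))" unfolding optJ_def opt_def expJ_def
    using fMT hatMT by (intro Min_le) auto
  have expJ_hat: "expJ (concat (map B0 \<tau>)) = (\<Sum>u\<in>X. real (t u) * pj * Gq \<tau> u)"
    using Jform[OF d\<tau> s\<tau> hatd] hats t1 unfolding B0_def by force
  define \<beta> where "\<beta> = real n / (real n + 1)"
  have b01: "0 \<le> \<beta>" "\<beta> \<le> 1" unfolding \<beta>_def using npos by auto
  have pos2: "0 < real n + real n * real n" using npos by (simp add: add_pos_pos)
  have beq1: "(1 + 1 / real n) * \<beta> = 1" unfolding \<beta>_def using npos pos2 by (simp add: field_simps)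
  have beq: "(1 + 1 / real n) ^ 2 * \<beta> ^ 2 = 1" using beq1 by (metis power_mult_distrib power_one)
  have bq: "\<And>w. w \<in> X \<Longrightarrow> \<beta> * q w \<le> p w"
  proof -
    fix w assume w: "w \<in> X"
    have "q w \<le> p w * (1 + 1 / real n)" using qb[OF w] t_hi[OF w] by linarith
    then have "\<beta> * q w \<le> \<beta> * (p w * (1 + 1 / real n))" using b01 by (intro mult_left_mono) auto
    also have "\<dots> = p w * ((1 + 1 / real n) * \<beta>)" by (simp only: mult_ac)
    also have "\<dots> = p w" using beq1 by simp
    finally show "\<beta> * q w \<le> p w" .
  qed
  have b_step: "expJ (concat (map B0 \<tau>)) \<le> (1 + 1 / real n) ^ 3 * optX"
  proof -
    have "(\<Sum>u\<in>X. real (t u) * pj * Gq \<tau> u) \<le> (\<Sum>u\<in>X. (1 + 1 / real n) ^ 3 * (p u * Gp \<tau> u))"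
    proof (rule sum_mono)
      fix u assume u: "u \<in> X"
      have th: "\<beta>^2 * Gq \<tau> u + (\<beta> - \<beta>^2) * Dq \<tau> u \<le> Gp \<tau> u"
        unfolding Gp_def Dq_def Gq_def using qb p01 s\<tau> u bq b01
        by (intro thinX) auto
      have nn: "0 \<le> Gq \<tau> u" "0 \<le> Gp \<tau> u" "0 \<le> Dq \<tau> u" using tourX[of \<tau> u] s\<tau> u by auto
      have bb: "0 \<le> \<beta> - \<beta>^2" using b01 by (simp add: power2_eq_square mult_left_le)
      have g0: "\<beta>^2 * Gq \<tau> u \<le> Gp \<tau> u" using th nn bb by (smt (verit) mult_nonneg_nonneg)
      have "Gq \<tau> u = (1 + 1 / real n) ^ 2 * (\<beta>^2 * Gq \<tau> u)" using beq by (simp add: mult.assoc[symmetric])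
      also have "\<dots> \<le> (1 + 1 / real n) ^ 2 * Gp \<tau> u" using g0 by (intro mult_left_mono) auto
      finally have g: "Gq \<tau> u \<le> (1 + 1 / real n) ^ 2 * Gp \<tau> u" .
      have "real (t u) * pj * Gq \<tau> u \<le> (p u * (1 + 1 / real n)) * Gq \<tau> u"
        using t_hi[OF u] nn by (intro mult_right_mono) auto
      also have "\<dots> \<le> (p u * (1 + 1 / real n)) * ((1 + 1 / real n) ^ 2 * Gp \<tau> u)"
        using g p01[OF u] npos by (intro mult_left_mono) auto
      also have "\<dots> = (1 + 1 / real n) ^ 3 * (p u * Gp \<tau> u)" by (simp add: power3_eq_cube power2_eq_square)
      finally show "real (t u) * pj * Gq \<tau> u \<le> (1 + 1 / real n) ^ 3 * (p u * Gp \<tau> u)" .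
    qed
    then show ?thesis using expJ_hat optX_eq by (simp add: sum_distrib_left)
  qed
  have "exp_lat d r (V - {r}) p (remdups (map fst \<pi>h)) \<le> 4 * (\<rho> * optJ)" using a_step hyp' by linarith
  also have "\<dots> \<le> 4 * (\<rho> * ((1 + 1 / real n) ^ 3 * optX))"
    using optJ_le b_step rho_pos by (intro mult_left_mono) auto
  also have "\<dots> \<le> (exp 1 / (exp 1 - 1)) ^ 4 * (\<rho> * ((1 + 1 / real n) ^ 3 * optX))"
    using e_bound rho_pos optX_nn by (intro mult_right_mono) auto
  also have "\<dots> = (1 + ((1 + 1 / real (card V)) ^ 3 - 1)) * (exp 1 / (exp 1 - 1)) ^ 4 * \<rho> * opt d r (heavy V r p) p"
    unfolding optX_def X_def n_def by simp
  finally show ?thesis .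
qed



lemma exp_lat_Nil: "exp_lat d r C p [] = 0"
  unfolding exp_lat_def by simp

lemma main_empty:
  assumes "heavy V r p = {}" "\<pi>h \<in> master_tours (J_clients V r p)"
  shows "exp_lat d r (V - {r}) p (remdups (map fst \<pi>h)) \<le> c * opt d r (heavy V r p) p"
proof -
  have "J_clients V r p = {}" using assms(1) unfolding J_clients_def by simp
  then have "\<pi>h = []" using assms(2) unfolding master_tours_def by simp
  moreover have mt: "master_tours {} = {[]}" unfolding master_tours_def by auto
  have "opt d r (heavy V r p) p = 0" unfolding opt_def assms(1) mt by (simp add: exp_lat_Nil)
  ultimately show ?thesis by (simp add: exp_lat_Nil)
qed

theorem corollary1:
  shows "\<exists>\<epsilon> :: nat \<Rightarrow> real. \<epsilon> \<longlonglongrightarrow> 0 \<and>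
    (\<forall>(V :: 'a set) d r p (\<rho> :: real) \<pi>h.
       finite V \<longrightarrow> r \<in> V \<longrightarrow> metric_on V d \<longrightarrow>
       (\<forall>v\<in>V - {r}. 0 \<le> p v \<and> p v \<le> 1) \<longrightarrow>
       \<pi>h \<in> master_tours (J_clients V r p) \<longrightarrow> consecutive \<pi>h \<longrightarrow>
       exp_lat (J_dist d) (r, 0) (J_clients V r p) (\<lambda>_. J_prob V r p) \<pi>h
         \<le> \<rho> * opt (J_dist d) (r, 0) (J_clients V r p) (\<lambda>_. J_prob V r p) \<longrightarrow>
       exp_lat d r (V - {r}) p (remdups (map fst \<pi>h))
         \<le> (1 + \<epsilon> (card V)) * (exp 1 / (exp 1 - 1)) ^ 4 * \<rho> * opt d r (heavy V r p) p)"
proof (intro exI[of _ "\<lambda>n. (1 + 1 / real n) ^ 3 - 1"] conjI eps_lim allI impI)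
  fix V :: "'a set" and d r p and \<rho> :: real and \<pi>h
  assume a: "finite V" "r \<in> V" "metric_on V d" "\<forall>v\<in>V - {r}. 0 \<le> p v \<and> p v \<le> 1"
    "\<pi>h \<in> master_tours (J_clients V r p)" "consecutive \<pi>h"
    "exp_lat (J_dist d) (r, 0) (J_clients V r p) (\<lambda>_. J_prob V r p) \<pi>h
         \<le> \<rho> * opt (J_dist d) (r, 0) (J_clients V r p) (\<lambda>_. J_prob V r p)"
  show "exp_lat d r (V - {r}) p (remdups (map fst \<pi>h))
         \<le> (1 + ((1 + 1 / real (card V)) ^ 3 - 1)) * (exp 1 / (exp 1 - 1)) ^ 4 * \<rho> * opt d r (heavy V r p) p"
  proof (cases "heavy V r p = {}")
    case True
    show ?thesis using main_empty[OF True a(5)] by simp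
  next
    case False
    show ?thesis by (rule main_nonempty[OF a False])
  qed
qed

end
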